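(* Suppose Assumptions 1–4 hold. Then the social welfare $W(\mathbf{x})$ achieved at any Cournot candidate $\mathbf{x}$ is positive, and the optimal social welfare $\sup_{\mathbf{y}\ge 0}W(\mathbf{y})$ is positive.
   Context: Cournot model: $N$ suppliers, inverse demand $p:[0,\infty)\to[0,\infty)$, supplier $n$ has cost $C_n:[0,\infty)\to[0,\infty)$ and chooses $x_n\ge0$; $X=\sum_n x_n$. $\partial_\pm$ denote right/left derivatives; $C_n'(0)$ is the right derivative at $0$. Assumption 1: each $C_n$ is convex, continuous, nondecreasing on $[0,\infty)$, continuously differentiable on $(0,\infty)$, with $C_n(0)=0$. Assumption 2: $p$ is continuous, nonnegative, nonincreasing, $p(0)>0$; its right derivative at $0$ exists and at every $q>0$ its left and right derivatives exist. Assumption 3: there exists $R>0$ such that $p(R)\le\min_n C_n'(0)$. Assumption 4: $p(0)>\min_n C_n'(0)$. Social welfare of $\mathbf{x}\ge0$: $W(\mathbf{x})=\int_0^X p(q)\,dq-\sum_{n=1}^N C_n(x_n)$. A nonnegative vector $\mathbf{x}$ is a Cournot candidate if for every $n$: $C_n'(x_n)\le p(X)+x_n\,\partial_-p(X)$ whenever $x_n>0$, and $C_n'(x_n)\ge p(X)+x_n\,\partial_+p(X)$. *)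

theory Defs
  imports "HOL-Analysis.Analysis"
begin

definition has_right_deriv :: "(real \<Rightarrow> real) \<Rightarrow> real \<Rightarrow> bool" where
  "has_right_deriv f x \<longleftrightarrow> (\<exists>L. ((\<lambda>y. (f y - f x) / (y - x)) \<longlongrightarrow> L) (at_right x))"

definition has_left_deriv :: "(real \<Rightarrow> real) \<Rightarrow> real \<Rightarrow> bool" where
  "has_left_deriv f x \<longleftrightarrow> (\<exists>L. ((\<lambda>y. (f y - f x) / (y - x)) \<longlongrightarrow> L) (at_left x))"

definition right_deriv :: "(real \<Rightarrow> real) \<Rightarrow> real \<Rightarrow> real" where
  "right_deriv f x = Lim (at_right x) (\<lambda>y. (f y - f x) / (y - x))"

definition left_deriv :: "(real \<Rightarrow> real) \<Rightarrow> real \<Rightarrow> real" where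
  "left_deriv f x = Lim (at_left x) (\<lambda>y. (f y - f x) / (y - x))"

definition marg :: "(real \<Rightarrow> real) \<Rightarrow> real \<Rightarrow> real" where
  "marg f x = (if x = 0 then right_deriv f 0 else deriv f x)"

text \<open>Suppliers are indexed by n < N; a supply vector is x :: nat => real (entries n < N).\<close>

definition total :: "nat \<Rightarrow> (nat \<Rightarrow> real) \<Rightarrow> real" where
  "total N x = (\<Sum>n<N. x n)"

definition welfare :: "nat \<Rightarrow> (real \<Rightarrow> real) \<Rightarrow> (nat \<Rightarrow> real \<Rightarrow> real) \<Rightarrow> (nat \<Rightarrow> real) \<Rightarrow> real" where
  "welfare N p C x = integral {0..total N x} p - (\<Sum>n<N. C n (x n))"

definition cournot_candidate ::
  "nat \<Rightarrow> (real \<Rightarrow> real) \<Rightarrow> (nat \<Rightarrow> real \<Rightarrow> real) \<Rightarrow> (nat \<Rightarrow> real) \<Rightarrow> bool" where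
  "cournot_candidate N p C x \<longleftrightarrow>
     (\<forall>n<N. 0 \<le> x n) \<and>
     (\<forall>n<N. 0 < x n \<longrightarrow>
        marg (C n) (x n) \<le> p (total N x) + x n * left_deriv p (total N x)) \<and>
     (\<forall>n<N. marg (C n) (x n) \<ge> p (total N x) + x n * right_deriv p (total N x))"

definition assumption1 :: "nat \<Rightarrow> (nat \<Rightarrow> real \<Rightarrow> real) \<Rightarrow> bool" where
  "assumption1 N C \<longleftrightarrow> (\<forall>n<N.
     (\<forall>x\<ge>0. 0 \<le> C n x) \<and>
     convex_on {0..} (C n) \<and> continuous_on {0..} (C n) \<and> mono_on {0..} (C n) \<and>
     (\<forall>x>0. C n differentiable (at x)) \<and> continuous_on {0<..} (deriv (C n)) \<and>
     C n 0 = 0)"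

definition assumption2 :: "(real \<Rightarrow> real) \<Rightarrow> bool" where
  "assumption2 p \<longleftrightarrow>
     continuous_on {0..} p \<and> (\<forall>q\<ge>0. 0 \<le> p q) \<and> antimono_on {0..} p \<and> 0 < p 0 \<and>
     has_right_deriv p 0 \<and> (\<forall>q>0. has_left_deriv p q \<and> has_right_deriv p q)"

definition min_marg0 :: "nat \<Rightarrow> (nat \<Rightarrow> real \<Rightarrow> real) \<Rightarrow> real" where
  "min_marg0 N C = Min ((\<lambda>n. right_deriv (C n) 0) ` {..<N})"

definition assumption3 :: "nat \<Rightarrow> (real \<Rightarrow> real) \<Rightarrow> (nat \<Rightarrow> real \<Rightarrow> real) \<Rightarrow> bool" where
  "assumption3 N p C \<longleftrightarrow> (\<exists>R>0. p R \<le> min_marg0 N C)"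

definition assumption4 :: "nat \<Rightarrow> (real \<Rightarrow> real) \<Rightarrow> (nat \<Rightarrow> real \<Rightarrow> real) \<Rightarrow> bool" where
  "assumption4 N p C \<longleftrightarrow> p 0 > min_marg0 N C"

end

theory Submission imports Defs begin

lemma slope_mono:
  fixes C :: "real \<Rightarrow> real"
  assumes cv: "convex_on {0..} C" and C0: "C 0 = 0" and s: "0 < s" "s \<le> t"
  shows "C s / s \<le> C t / t"
proof -
  have t: "0 < t" using s by linarith
  have "C ((1 - s/t) *\<^sub>R 0 + (s/t) *\<^sub>R t) \<le> (1 - s/t) * C 0 + (s/t) * C t"
    by (rule convex_onD[OF cv]) (use s t in auto)
  hence "C s \<le> (s/t) * C t" using t C0 by simp
  thus ?thesis using s t by (simp add: field_simps)
qed

lemma rd_props: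
  fixes C :: "real \<Rightarrow> real"
  assumes cv: "convex_on {0..} C" and C0: "C 0 = 0" and nn: "\<forall>x\<ge>0. 0 \<le> C x"
  shows "((\<lambda>y. C y / y) \<longlongrightarrow> right_deriv C 0) (at_right 0)"
    and "\<And>t. 0 < t \<Longrightarrow> right_deriv C 0 \<le> C t / t"
    and "0 \<le> right_deriv C 0"
proof -
  define S where "S = (\<lambda>y. C y / y) ` {0<..}"
  define L where "L = Inf S"
  have bdd: "bdd_below S" unfolding S_def bdd_below_def
    by (rule exI[of _ 0]) (auto intro!: divide_nonneg_pos simp: nn)
  have ne: "S \<noteq> {}" unfolding S_def by auto
  have Lle: "L \<le> C t / t" if "0 < t" for t
    unfolding L_def S_def using bdd that by (intro cInf_lower) (auto simp: S_def)
  have L0: "0 \<le> L" unfolding L_def using ne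
    by (rule cInf_greatest) (auto simp: S_def nn intro!: divide_nonneg_pos)
  have lim: "((\<lambda>y. C y / y) \<longlongrightarrow> L) (at_right 0)"
  proof (rule order_tendstoI)
    fix a assume "a < L"
    show "\<forall>\<^sub>F y in at_right 0. a < C y / y"
      unfolding eventually_at_right_field using Lle \<open>a < L\<close>
      by (intro exI[of _ 1]) (auto intro: less_le_trans)
  next
    fix a assume "L < a"
    then obtain s where "s \<in> S" "s < a" unfolding L_def using ne cInf_less_iff bdd by blast
    then obtain t where t: "0 < t" "C t / t < a" unfolding S_def by auto
    show "\<forall>\<^sub>F y in at_right 0. C y / y < a"
      unfolding eventually_at_right_field
    proof (intro exI[of _ t] conjI allI impI)
      fix y assume "0 < y" "y < t"
      hence "C y / y \<le> C t / t" using slope_mono[OF cv C0, of y t] by auto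
      thus "C y / y < a" using t by linarith
    qed (use t in auto)
  qed
  have eq: "right_deriv C 0 = L"
    unfolding right_deriv_def using lim C0 by (simp add: tendsto_Lim)
  show "((\<lambda>y. C y / y) \<longlongrightarrow> right_deriv C 0) (at_right 0)" using lim eq by simp
  show "\<And>t. 0 < t \<Longrightarrow> right_deriv C 0 \<le> C t / t" using Lle eq by simp
  show "0 \<le> right_deriv C 0" using L0 eq by simp
qed

lemma tangent:
  fixes C :: "real \<Rightarrow> real"
  assumes cv: "convex_on {0..} C" and d: "C differentiable (at x)" and x: "0 < x" and y: "0 \<le> y"
  shows "C y - C x \<ge> deriv C x * (y - x)"
proof -
  have "(C has_real_derivative deriv C x) (at x)" using d DERIV_deriv_iff_real_differentiable by blast
  hence "(C has_real_derivative deriv C x) (at x within {0..})" by (rule has_field_derivative_at_within)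
  thus ?thesis
    by (intro convex_on_imp_above_tangent[OF cv]) (use x y in auto)
qed

lemma ld_nonpos:
  fixes p :: "real \<Rightarrow> real"
  assumes am: "antimono_on {0..} p" and X: "0 < X" and h: "has_left_deriv p X"
  shows "left_deriv p X \<le> 0"
proof -
  obtain L where L: "((\<lambda>y. (p y - p X) / (y - X)) \<longlongrightarrow> L) (at_left X)"
    using h unfolding has_left_deriv_def by blast
  have "left_deriv p X = L" unfolding left_deriv_def using L by (simp add: tendsto_Lim)
  moreover have "L \<le> 0"
  proof (rule tendsto_upperbound[OF L])
    show "\<forall>\<^sub>F y in at_left X. (p y - p X) / (y - X) \<le> 0"
      unfolding eventually_at_left_field using X
    proof (intro exI[of _ 0] conjI allI impI)
      fix y assume "0 < y" "y < X"
      hence "p X \<le> p y" using am X by (auto simp: monotone_on_def)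
      thus "(p y - p X) / (y - X) \<le> 0" using \<open>0 < y\<close> \<open>y < X\<close> by (intro divide_nonneg_neg) auto
    qed (use X in auto)
  qed simp
  ultimately show ?thesis by simp
qed

lemma int_bounds:
  fixes p :: "real \<Rightarrow> real" and a b :: real
  assumes cp: "continuous_on {0..} p" and am: "antimono_on {0..} p" and ab: "0 \<le> a" "a \<le> b"
  shows "p integrable_on {a..b}" "(b - a) * p b \<le> integral {a..b} p" "integral {a..b} p \<le> (b - a) * p a"
proof -
  show i: "p integrable_on {a..b}"
    using continuous_on_subset[OF cp, of "{a..b}"] ab by (intro integrable_continuous_interval) auto
  have "integral {a..b} (\<lambda>_. p b) \<le> integral {a..b} p"
    by (rule integral_le[OF _ i]) (use am ab in \<open>auto simp: monotone_on_def\<close>)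
  thus "(b - a) * p b \<le> integral {a..b} p" using ab by simp
  have "integral {a..b} p \<le> integral {a..b} (\<lambda>_. p a)"
    by (rule integral_le[OF i]) (use am ab in \<open>auto simp: monotone_on_def\<close>)
  thus "integral {a..b} p \<le> (b - a) * p a" using ab by simp
qed

lemma ev_witness:
  fixes b :: real
  assumes "eventually P (at_right 0)" "0 < b"
  shows "\<exists>y. 0 < y \<and> y < b \<and> P y"
proof -
  obtain c where c: "c > 0" "\<forall>y>0. y < c \<longrightarrow> P y" using assms(1) unfolding eventually_at_right_field by blast
  show ?thesis using c assms(2) by (intro exI[of _ "min b c / 2"]) auto
qed

lemma p_right_lim:
  fixes p :: "real \<Rightarrow> real"
  assumes "continuous_on {0..} p"
  shows "(p \<longlongrightarrow> p 0) (at_right 0)"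
proof -
  have "(p \<longlongrightarrow> p 0) (at 0 within {0..})" using assms unfolding continuous_on_def by auto
  thus ?thesis by (rule tendsto_within_subset) auto
qed

theorem proposition5:
  fixes N :: nat and p :: "real \<Rightarrow> real" and C :: "nat \<Rightarrow> real \<Rightarrow> real"
  assumes "0 < N"
    and "assumption1 N C" and "assumption2 p"
    and "assumption3 N p C" and "assumption4 N p C"
  shows "(\<forall>x. cournot_candidate N p C x \<longrightarrow> 0 < welfare N p C x) \<and>
         0 < Sup ((welfare N p C ` {y. \<forall>n<N. 0 \<le> y n}))"
proof -
  note A1 = assms(2)[unfolded assumption1_def]
  have Cnn: "\<And>n x. n < N \<Longrightarrow> 0 \<le> x \<Longrightarrow> 0 \<le> C n x" using A1 by blast
  have Ccv: "\<And>n. n < N \<Longrightarrow> convex_on {0..} (C n)" using A1 by blast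
  have Cd: "\<And>n x. n < N \<Longrightarrow> 0 < x \<Longrightarrow> C n differentiable (at x)" using A1 by blast
  have C0: "\<And>n. n < N \<Longrightarrow> C n 0 = 0" using A1 by blast
  note A2 = assms(3)[unfolded assumption2_def]
  have cp: "continuous_on {0..} p" and am: "antimono_on {0..} p" and p0: "0 < p 0"
    and hld: "\<And>q. 0 < q \<Longrightarrow> has_left_deriv p q" using A2 by auto
  have pmono: "\<And>a b. 0 \<le> a \<Longrightarrow> a \<le> b \<Longrightarrow> p b \<le> p a" using am by (auto simp: monotone_on_def)
  have pnn: "\<And>q. 0 \<le> q \<Longrightarrow> 0 \<le> p q" using A2 by auto
  define c where "c = min_marg0 N C"
  have fin: "finite ((\<lambda>n. right_deriv (C n) 0) ` {..<N})" "(\<lambda>n. right_deriv (C n) 0) ` {..<N} \<noteq> {}"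
    using assms(1) by auto
  have cle: "\<And>n. n < N \<Longrightarrow> c \<le> right_deriv (C n) 0"
    unfolding c_def min_marg0_def using fin by (intro Min_le) auto
  obtain m where m: "m < N" "right_deriv (C m) 0 = c"
    using Min_in[OF fin] unfolding c_def min_marg0_def by auto
  have cp0: "c < p 0" using assms(5) unfolding assumption4_def c_def by simp
  obtain R where R: "R > 0" "p R \<le> c" using assms(4) unfolding assumption3_def c_def by blast
  have rdlim: "\<And>n. n < N \<Longrightarrow> ((\<lambda>y. C n y / y) \<longlongrightarrow> right_deriv (C n) 0) (at_right 0)"
    and rdle: "\<And>n t. n < N \<Longrightarrow> 0 < t \<Longrightarrow> right_deriv (C n) 0 \<le> C n t / t"
    using rd_props[OF Ccv C0] Cnn by blast+

  have part1: "\<forall>x. cournot_candidate N p C x \<longrightarrow> 0 < welfare N p C x"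
  proof (intro allI impI)
    fix x assume cand: "cournot_candidate N p C x"
    define X where "X = total N x"
    have xnn: "\<And>n. n < N \<Longrightarrow> 0 \<le> x n" using cand unfolding cournot_candidate_def by blast
    have up: "\<And>n. n < N \<Longrightarrow> 0 < x n \<Longrightarrow> marg (C n) (x n) \<le> p X + x n * left_deriv p X"
      using cand unfolding cournot_candidate_def X_def by blast
    have lo: "\<And>n. n < N \<Longrightarrow> marg (C n) (x n) \<ge> p X + x n * right_deriv p X"
      using cand unfolding cournot_candidate_def X_def by blast
    have X0: "0 \<le> X" unfolding X_def total_def using xnn by (intro sum_nonneg) auto
    have xle: "\<And>n. n < N \<Longrightarrow> x n \<le> X"
      unfolding X_def total_def using xnn by (intro member_le_sum) auto
    have pX: "p X \<le> p 0" using pmono X0 by simp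
    have dle: "deriv (C n) (x n) \<le> p X" if n: "n < N" "0 < x n" for n
    proof -
      have Xp: "0 < X" using xle[OF n(1)] n(2) by linarith
      have "x n * left_deriv p X \<le> 0"
        using ld_nonpos[OF am Xp hld[OF Xp]] n(2) by (simp add: mult_nonneg_nonpos)
      thus ?thesis using up[OF n] n(2) unfolding marg_def by simp
    qed
    have key: "C n (x n) \<le> x n * p X" if n: "n < N" for n
    proof (cases "x n = 0")
      case True thus ?thesis using C0[OF n] by simp
    next
      case False
      hence xp: "0 < x n" using xnn[OF n] by simp
      have "C n 0 - C n (x n) \<ge> deriv (C n) (x n) * (0 - x n)"
        by (rule tangent[OF Ccv[OF n] Cd[OF n xp] xp]) simp
      hence "C n (x n) \<le> x n * deriv (C n) (x n)" using C0[OF n] by (simp add: algebra_simps)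
      also have "\<dots> \<le> x n * p X" using dle[OF n xp] xp by (intro mult_left_mono) auto
      finally show ?thesis .
    qed
    have sumX: "(\<Sum>n<N. x n * p X) = X * p X" unfolding X_def total_def by (simp add: sum_distrib_right)
    have sle: "(\<Sum>n<N. C n (x n)) \<le> X * p X"
      using sum_mono[of "{..<N}" "\<lambda>n. C n (x n)" "\<lambda>n. x n * p X"] key sumX by simp
    have ib: "X * p X \<le> integral {0..X} p" using int_bounds(2)[OF cp am order_refl X0] by simp
    have W: "welfare N p C x = integral {0..X} p - (\<Sum>n<N. C n (x n))"
      unfolding welfare_def X_def by simp
    show "0 < welfare N p C x"
    proof (cases "p X < p 0")
      case True
      have Xp: "0 < X" using True X0 by (cases "X = 0") auto
      have "eventually (\<lambda>t. (p 0 + p X)/2 < p t) (at_right 0)"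
        using p_right_lim[OF cp] True by (intro order_tendstoD) auto
      then obtain d where d: "0 < d" "d < X" "(p 0 + p X)/2 < p d" using ev_witness Xp by blast
      have "integral {0..X} p = integral {0..d} p + integral {d..X} p"
        using Henstock_Kurzweil_Integration.integral_combine[where a=0 and c=d and b=X and f=p] int_bounds(1)[OF cp am order_refl X0] d by simp
      also have "\<dots> \<ge> (d - 0) * p d + (X - d) * p X"
        using int_bounds(2)[OF cp am, of 0 d] int_bounds(2)[OF cp am, of d X] d by simp
      finally have "(d - 0) * p d + (X - d) * p X \<le> integral {0..X} p" .
      moreover have "d * p X < d * p d" using d True by (intro mult_strict_left_mono) auto
      ultimately have "X * p X < integral {0..X} p" by (simp add: algebra_simps)
      thus ?thesis using W sle by simp
    next
      case False
      hence pXe: "p X = p 0" using pX by simp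
      have xm: "0 < x m"
      proof (rule ccontr)
        assume "\<not> 0 < x m"
        hence "x m = 0" using xnn[OF m(1)] by simp
        hence "marg (C m) (x m) = c" using m unfolding marg_def by simp
        thus False using lo[OF m(1)] \<open>x m = 0\<close> pXe cp0 by simp
      qed
      have "eventually (\<lambda>t. C m t / t < p X) (at_right 0)"
        using rdlim[OF m(1)] m(2) cp0 pXe by (intro order_tendstoD) auto
      then obtain y where y: "0 < y" "y < x m" "C m y / y < p X" using ev_witness xm by blast
      have "C m y - C m (x m) \<ge> deriv (C m) (x m) * (y - x m)"
        by (rule tangent[OF Ccv[OF m(1)] Cd[OF m(1) xm] xm]) (use y in simp)
      hence "C m (x m) \<le> C m y + deriv (C m) (x m) * (x m - y)" by (simp add: algebra_simps)
      also have "\<dots> \<le> C m y + p X * (x m - y)"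
        using dle[OF m(1) xm] y by (intro add_left_mono mult_right_mono) auto
      also have "C m y < y * p X" using y by (simp add: field_simps)
      hence "C m y + p X * (x m - y) < x m * p X" by (simp add: algebra_simps)
      finally have strict: "C m (x m) < x m * p X" .
      have "(\<Sum>n<N. C n (x n)) < (\<Sum>n<N. x n * p X)"
        using key strict m(1) by (intro sum_strict_mono_ex1) auto
      thus ?thesis using W sumX ib by simp
    qed
  qed

  define Y where "Y = {y::nat\<Rightarrow>real. \<forall>n<N. 0 \<le> y n}"
  have c0: "0 \<le> c" using R pnn[of R] by simp
  have bound: "welfare N p C y \<le> p 0 * R" if y: "y \<in> Y" for y
  proof -
    define X where "X = total N y"
    have ynn: "\<And>n. n < N \<Longrightarrow> 0 \<le> y n" using y unfolding Y_def by blast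
    have X0: "0 \<le> X" unfolding X_def total_def using ynn by (intro sum_nonneg) auto
    have Cge: "c * y n \<le> C n (y n)" if n: "n < N" for n
    proof (cases "y n = 0")
      case True thus ?thesis using C0[OF n] by simp
    next
      case False
      hence yp: "0 < y n" using ynn[OF n] by simp
      have "c \<le> C n (y n) / y n" using cle[OF n] rdle[OF n yp] by linarith
      thus ?thesis using yp by (simp add: field_simps)
    qed
    have "c * X = (\<Sum>n<N. c * y n)" unfolding X_def total_def by (simp add: sum_distrib_left)
    also have "\<dots> \<le> (\<Sum>n<N. C n (y n))" using Cge by (intro sum_mono) auto
    finally have sC: "c * X \<le> (\<Sum>n<N. C n (y n))" .
    have "integral {0..X} p \<le> p 0 * R + c * X"
    proof (cases "X \<le> R")
      case True
      have "integral {0..X} p \<le> (X - 0) * p 0" using int_bounds(3)[OF cp am order_refl X0] .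
      also have "\<dots> \<le> R * p 0" using True p0 by (intro mult_right_mono) auto
      finally have "integral {0..X} p \<le> R * p 0" .
      moreover have "0 \<le> c * X" using c0 X0 by simp
      ultimately show ?thesis by (simp add: mult.commute)
    next
      case False
      have "integral {0..X} p = integral {0..R} p + integral {R..X} p"
        using Henstock_Kurzweil_Integration.integral_combine[where a=0 and c=R and b=X and f=p] int_bounds(1)[OF cp am order_refl X0] R False by simp
      also have "\<dots> \<le> (R - 0) * p 0 + (X - R) * p R"
        using int_bounds(3)[OF cp am, of 0 R] int_bounds(3)[OF cp am, of R X] R False
        by (intro add_mono) auto
      also have "\<dots> \<le> p 0 * R + c * X"
      proof -
        have h1: "(X - R) * p R \<le> (X - R) * c" using R False by (intro mult_left_mono) auto
        have h2: "(X - R) * c \<le> c * X" using R c0 by (simp add: algebra_simps)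
        show ?thesis using h1 h2 by (simp add: mult.commute)
      qed
      finally show ?thesis .
    qed
    thus ?thesis using sC unfolding welfare_def X_def by simp
  qed
  have bdd: "bdd_above (welfare N p C ` Y)" using bound by (intro bdd_aboveI2) auto
  have "eventually (\<lambda>t. C m t / t < (c + p 0)/2 \<and> (c + p 0)/2 < p t) (at_right 0)"
    using rdlim[OF m(1)] p_right_lim[OF cp] m(2) cp0
    by (intro eventually_conj order_tendstoD) auto
  then obtain e where e: "0 < e" "C m e / e < (c + p 0)/2" "(c + p 0)/2 < p e"
    using ev_witness[of _ 1] by auto
  define y0 where "y0 = (\<lambda>n. if n = m then e else 0::real)"
  have y0Y: "y0 \<in> Y" unfolding Y_def y0_def using e by auto
  have tot: "total N y0 = e" unfolding total_def y0_def using m(1) by simp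
  have sC: "(\<Sum>n<N. C n (y0 n)) = C m e"
  proof -
    have "(\<Sum>n<N. C n (y0 n)) = (\<Sum>n<N. if n = m then C m e else 0)"
      using C0 by (intro sum.cong) (auto simp: y0_def)
    thus ?thesis using m(1) by simp
  qed
  have "C m e < e * ((c + p 0)/2)" using e by (simp add: field_simps)
  also have "\<dots> \<le> e * p e" using e by (intro mult_left_mono) auto
  also have "\<dots> \<le> integral {0..e} p" using int_bounds(2)[OF cp am order_refl, of e] e by simp
  finally have "0 < welfare N p C y0" unfolding welfare_def tot sC by simp
  also have "welfare N p C y0 \<le> Sup (welfare N p C ` Y)"
    using bdd y0Y by (intro cSup_upper) auto
  finally have "0 < Sup (welfare N p C ` Y)" .
  thus ?thesis using part1 unfolding Y_def by simp
qed

end
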